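(* Let $G$ be a connected bipartite finite simple graph with parts $X$ and $Y$, and let $\mathcal{N}G$ be its normal graph algebra over a field $\mathbb{F}$ of characteristic not $2$. Then $\mathrm{ann}\,G$ is the one-dimensional span $\left\langle \sum_{x\in X}x-\sum_{y\in Y}y\right\rangle$.
   Context: For a finite simple graph $G$ with vertex set $VG$ and edge set $EG$ (edge with endpoints $x,y$ written $[x,y]$), the normal graph algebra $\mathcal{N}G$ is the $\mathbb{F}$-vector space $U_G\oplus\mathfrak{Z}_G$, where $U_G$ has basis $VG$ and $\mathfrak{Z}_G$ has basis $EG$, with commutative bilinear product determined by: for distinct vertices $x,y$, $xy=[x,y]$ if adjacent and $0$ otherwise; $x^2=\sum_{y\sim x}[x,y]$; all products involving an element of $\mathfrak{Z}_G$ are $0$. Equivalently, for $u=\sum_x\theta_x x$, $v=\sum_x\eta_x x$, $uv=\sum_{[x,y]\in EG}(\theta_x+\theta_y)(\eta_x+\eta_y)[x,y]$. The annihilator is $\mathrm{ann}\,G=\{u\in U_G: uv=0\text{ for all }v\in U_G\}$. *)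

theory Defs
  imports Main
begin

text \<open>The edge [x,y] is represented by the
two-element set {x,y}. Elements of U_G are coefficient functions V -> F
(zero outside V); elements of Z_G are coefficient functions on edges.\<close>

definition simple_graph :: "'v set \<Rightarrow> ('v \<Rightarrow> 'v \<Rightarrow> bool) \<Rightarrow> bool" where
  "simple_graph V E \<longleftrightarrow> finite V \<and> (\<forall>x y. E x y \<longrightarrow> x \<in> V \<and> y \<in> V)
     \<and> (\<forall>x y. E x y \<longrightarrow> E y x) \<and> (\<forall>x. \<not> E x x)"

definition graph_connected :: "'v set \<Rightarrow> ('v \<Rightarrow> 'v \<Rightarrow> bool) \<Rightarrow> bool" where
  "graph_connected V E \<longleftrightarrow> V \<noteq> {} \<and> (\<forall>x\<in>V. \<forall>y\<in>V. E\<^sup>*\<^sup>* x y)"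

definition bipartite_parts :: "'v set \<Rightarrow> ('v \<Rightarrow> 'v \<Rightarrow> bool) \<Rightarrow> 'v set \<Rightarrow> 'v set \<Rightarrow> bool" where
  "bipartite_parts V E X Y \<longleftrightarrow> X \<union> Y = V \<and> X \<inter> Y = {}
     \<and> (\<forall>x y. E x y \<longrightarrow> (x \<in> X \<and> y \<in> Y) \<or> (x \<in> Y \<and> y \<in> X))"

definition edge_vec :: "'v \<Rightarrow> 'v \<Rightarrow> 'v set \<Rightarrow> 'a::field" where
  "edge_vec x y = (\<lambda>e. if e = {x, y} then 1 else 0)"

definition vprod :: "'v set \<Rightarrow> ('v \<Rightarrow> 'v \<Rightarrow> bool) \<Rightarrow> 'v \<Rightarrow> 'v \<Rightarrow> 'v set \<Rightarrow> 'a::field" where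
  "vprod V E x y = (if x = y then (\<lambda>e. \<Sum>z\<in>{z\<in>V. E x z}. edge_vec x z e)
                    else if E x y then edge_vec x y else (\<lambda>e. 0))"

definition nga_mult :: "'v set \<Rightarrow> ('v \<Rightarrow> 'v \<Rightarrow> bool) \<Rightarrow> ('v \<Rightarrow> 'a::field) \<Rightarrow> ('v \<Rightarrow> 'a) \<Rightarrow> 'v set \<Rightarrow> 'a" where
  "nga_mult V E u v = (\<lambda>e. \<Sum>x\<in>V. \<Sum>y\<in>V. u x * v y * vprod V E x y e)"

definition U_G :: "'v set \<Rightarrow> ('v \<Rightarrow> 'a::field) set" where
  "U_G V = {u. \<forall>x. x \<notin> V \<longrightarrow> u x = 0}"

definition nga_ann :: "'v set \<Rightarrow> ('v \<Rightarrow> 'v \<Rightarrow> bool) \<Rightarrow> ('v \<Rightarrow> 'a::field) set" where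
  "nga_ann V E = {u \<in> U_G V. \<forall>v \<in> U_G V. nga_mult V E u v = (\<lambda>e. 0)}"

end

theory Submission
  imports Defs
begin

lemma vprod_edge:
  assumes g: "simple_graph V E" and ab: "E a b"
  shows "(vprod V E x y {a,b} :: 'a::field) = ((if x=a then 1 else 0) + (if x=b then 1 else 0)) * ((if y=a then 1 else 0) + (if y=b then 1 else 0))"
proof -
  have neq: "a \<noteq> b" using g ab unfolding simple_graph_def by metis
  have V: "a \<in> V" "b \<in> V" "E b a" using g ab unfolding simple_graph_def by auto
  show ?thesis
  proof (cases "x = y")
    case True
    have s: "(\<Sum>z\<in>{z\<in>V. E x z}. (edge_vec x z {a,b} :: 'a)) = (\<Sum>z\<in>{z\<in>V. E x z}. if z = (if x = a then b else a) then (if x = a \<or> x = b then 1 else 0) else 0)"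
      apply (rule sum.cong, simp)
      using neq by (auto simp: edge_vec_def doubleton_eq_iff)
    have fin: "finite {z\<in>V. E x z}" using g unfolding simple_graph_def by auto
    have "vprod V E x y {a,b} = (\<Sum>z\<in>{z\<in>V. E x z}. (edge_vec x z {a,b} :: 'a))"
      using True by (simp add: vprod_def)
    also have "\<dots> = (if (if x = a then b else a) \<in> {z\<in>V. E x z} then (if x = a \<or> x = b then 1 else 0) else 0)"
      unfolding s by (rule sum.delta[OF fin])
    finally show ?thesis using True neq V ab by auto
  next
    case False
    then show ?thesis using neq V ab
      by (auto simp: vprod_def edge_vec_def doubleton_eq_iff)
  qed
qed

lemma sum_ind:
  assumes "finite V" "a \<in> V" "b \<in> V" "a \<noteq> b"
  shows "(\<Sum>x\<in>V. (u x :: 'a::field) * ((if x=a then 1 else 0) + (if x=b then 1 else 0))) = u a + u b"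
proof -
  have "(\<Sum>x\<in>V. (u x :: 'a::field) * ((if x=a then 1 else 0) + (if x=b then 1 else 0)))
     = (\<Sum>x\<in>V. (if x = a then u a else 0) + (if x = b then u b else 0))"
    by (rule sum.cong) (use assms in auto)
  also have "\<dots> = u a + u b" using assms by (simp add: sum.distrib)
  finally show ?thesis .
qed

lemma mult_edge:
  assumes g: "simple_graph V E" and ab: "E a b"
  shows "nga_mult V E u v {a,b} = ((u a + u b) * (v a + v b) :: 'a::field)"
proof -
  have neq: "a \<noteq> b" using g ab unfolding simple_graph_def by metis
  have V: "a \<in> V" "b \<in> V" "finite V" using g ab unfolding simple_graph_def by auto
  define f :: "_ \<Rightarrow> 'a" where "f x = (if x=a then 1 else 0) + (if x=b then 1 else 0)" for x
  have "nga_mult V E u v {a,b} = (\<Sum>x\<in>V. \<Sum>y\<in>V. u x * v y * (f x * f y))"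
    unfolding nga_mult_def f_def by (simp add: vprod_edge[OF g ab])
  also have "\<dots> = (\<Sum>x\<in>V. u x * f x) * (\<Sum>y\<in>V. v y * f y)"
    by (simp add: sum_product mult_ac)
  also have "\<dots> = (u a + u b) * (v a + v b)"
    unfolding f_def by (simp only: sum_ind[OF V(3,1,2) neq])
  finally show ?thesis .
qed

lemma mult_nonedge:
  assumes "\<not> (\<exists>a b. E a b \<and> e = {a,b})"
  shows "nga_mult V E u v e = (0::'a::field)"
proof -
  have "vprod V E x y e = (0::'a)" for x y
    using assms by (auto simp: vprod_def edge_vec_def intro!: sum.neutral)
  then show ?thesis unfolding nga_mult_def by simp
qed

theorem corollary5p4:
  fixes V X Y :: "'v set" and E :: "'v \<Rightarrow> 'v \<Rightarrow> bool"
  assumes "simple_graph V E"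
    and "graph_connected V E"
    and "bipartite_parts V E X Y"
    and "(2::'a::field) \<noteq> 0"
  shows "(nga_ann V E :: ('v \<Rightarrow> 'a) set) =
         {(\<lambda>v. c * ((\<Sum>x\<in>X. if v = x then 1 else 0) - (\<Sum>y\<in>Y. if v = y then 1 else 0))) | c. True}"
proof -
  note g = assms(1)
  have finV: "finite V" using g unfolding simple_graph_def by auto
  have XY: "X \<union> Y = V" "X \<inter> Y = {}" using assms(3) unfolding bipartite_parts_def by auto
  have finX: "finite X" "finite Y" using finV XY by (metis finite_Un)+
  define s :: "'v \<Rightarrow> 'a" where "s v = (if v \<in> X then 1 else if v \<in> Y then -1 else 0)" for v
  have sdef: "(\<lambda>v. c * ((\<Sum>x\<in>X. if v = x then 1 else 0) - (\<Sum>y\<in>Y. if v = y then 1 else 0))) = (\<lambda>v. c * s v)" for c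
  proof -
    have "(\<Sum>x\<in>X. if v = x then 1 else 0) = (if v \<in> X then 1 else (0::'a))" for v
      using finX(1) by (simp add: sum.delta)
    moreover have "(\<Sum>x\<in>Y. if v = x then 1 else 0) = (if v \<in> Y then 1 else (0::'a))" for v
      using finX(2) by (simp add: sum.delta)
    ultimately show ?thesis using XY unfolding s_def fun_eq_iff by auto
  qed
  have sedge: "s a + s b = 0" "s b = - s a" if "E a b" for a b
    using assms(3) that XY unfolding bipartite_parts_def s_def by auto
  have ssq: "s v * s v = 1" if "v \<in> V" for v
    using that XY by (auto simp: s_def)
  have s0: "s v = 0" if "v \<notin> V" for v
    using that XY by (auto simp: s_def)
  have ann_iff: "u \<in> nga_ann V E \<longleftrightarrow> u \<in> U_G V \<and> (\<forall>a b. E a b \<longrightarrow> u a + u b = 0)" for u :: "'v \<Rightarrow> 'a"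
  proof
    assume u: "u \<in> nga_ann V E"
    have "u a + u b = 0" if ab: "E a b" for a b
    proof -
      have aV: "a \<in> V" "b \<in> V" "a \<noteq> b" using g ab unfolding simple_graph_def by metis+
      define v :: "'v \<Rightarrow> 'a" where "v x = (if x = a then 1 else 0)" for x
      have "v \<in> U_G V" using aV by (auto simp: U_G_def v_def)
      then have "nga_mult V E u v = (\<lambda>e. 0)" using u unfolding nga_ann_def by auto
      then have "nga_mult V E u v {a,b} = 0" by simp
      then show ?thesis using mult_edge[OF g ab, of u v] aV by (simp add: v_def)
    qed
    then show "u \<in> U_G V \<and> (\<forall>a b. E a b \<longrightarrow> u a + u b = 0)" using u unfolding nga_ann_def by auto
  next
    assume u: "u \<in> U_G V \<and> (\<forall>a b. E a b \<longrightarrow> u a + u b = 0)"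
    have "nga_mult V E u v = (\<lambda>e. 0)" for v
    proof
      fix e
      show "nga_mult V E u v e = 0"
      proof (cases "\<exists>a b. E a b \<and> e = {a,b}")
        case True
        then obtain a b where "E a b" "e = {a,b}" by blast
        then show ?thesis using mult_edge[OF g, of a b u v] u by simp
      next
        case False
        then show ?thesis by (rule mult_nonedge)
      qed
    qed
    then show "u \<in> nga_ann V E" using u unfolding nga_ann_def by auto
  qed
  show ?thesis
    unfolding sdef
  proof (intro set_eqI iffI)
    fix u :: "'v \<Rightarrow> 'a"
    assume "u \<in> nga_ann V E"
    then have uU: "u \<in> U_G V" and ue: "\<And>a b. E a b \<Longrightarrow> u a + u b = 0" using ann_iff by auto
    obtain v0 where v0: "v0 \<in> V" using assms(2) unfolding graph_connected_def by auto
    have inv: "u w * s w = u v0 * s v0" if "E\<^sup>*\<^sup>* v0 w" for w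
      using that
    proof (induction rule: rtranclp_induct)
      case base then show ?case by simp
    next
      case (step y z)
      have "u z = - u y" using ue[OF step(2)] by (simp add: add.commute eq_neg_iff_add_eq_0)
      then show ?case using sedge[OF step(2)] step(3) by simp
    qed
    have uw: "u w = u v0 * s v0 * s w" for w
    proof (cases "w \<in> V")
      case True
      then have "E\<^sup>*\<^sup>* v0 w" using assms(2) v0 unfolding graph_connected_def by auto
      then have "u w * s w * s w = u v0 * s v0 * s w" using inv by metis
      then show ?thesis using ssq[OF True] by (simp add: mult.assoc)
    next
      case False
      then show ?thesis using uU s0 by (simp add: U_G_def)
    qed
    have "u = (\<lambda>v. (u v0 * s v0) * s v)" by (intro ext) (rule uw)
    then show "u \<in> {\<lambda>v. c * s v |c. True}" by blast
  next
    fix u :: "'v \<Rightarrow> 'a"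
    assume "u \<in> {\<lambda>v. c * s v |c. True}"
    then obtain c where c: "u = (\<lambda>v. c * s v)" by blast
    have "u \<in> U_G V" using c s0 by (simp add: U_G_def)
    moreover have "u a + u b = 0" if "E a b" for a b
    proof -
      have "u a + u b = c * (s a + s b)" using c by (simp add: distrib_left)
      then show ?thesis using sedge(1)[OF that] by simp
    qed
    ultimately show "u \<in> nga_ann V E" using ann_iff by auto
  qed
qed

end
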